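(* For every integer $m\ge2$, the Bernoulli numbers satisfy $$B_{2m}=\frac{-1}{(m+1)(2m+1)}\sum_{j=m-\lfloor m/2\rfloor}^{m-1}\binom{m+1}{2m-2j+1}(1+2j)\,B_{2j}.$$
   Context: $B_m$ denotes the Bernoulli numbers, defined by $\frac{t}{e^t-1}=\sum_{m\ge0}B_m\frac{t^m}{m!}$ (so $B_2=1/6$, $B_4=-1/30$). *)

theory Defs
  imports "HOL-Computational_Algebra.Formal_Power_Series"
begin

definition bernoulli :: "nat \<Rightarrow> rat" where
  "bernoulli m = fact m * fps_nth (fps_X / (fps_exp 1 - 1)) m"

end

theory Submission imports Defs "HOL-Computational_Algebra.Polynomial"
begin
unbundle fps_syntax

definition sgnf :: "rat fps \<Rightarrow> rat fps" where
  "sgnf f = Abs_fps (\<lambda>n. (-1)^n * f $ n)"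

lemma sgnf_mult: "sgnf (f * g) = sgnf f * sgnf g"
proof (rule fps_ext)
  fix n
  have "sgnf (f*g) $ n = (\<Sum>i=0..n. (-1)^n * (f$i * g$(n-i)))"
    by (simp add: sgnf_def fps_mult_nth sum_distrib_left)
  also have "\<dots> = (\<Sum>i=0..n. ((-1)^i * f$i) * ((-1)^(n-i) * g$(n-i)))"
  proof (rule sum.cong)
    fix i assume "i \<in> {0..n}"
    then have "(-1::rat)^n = (-1)^i * (-1)^(n-i)"
      by (simp add: power_add[symmetric])
    then show "(-1)^n * (f$i * g$(n-i)) = ((-1)^i * f$i) * ((-1)^(n-i) * g$(n-i))"
      by simp
  qed simp
  also have "\<dots> = (sgnf f * sgnf g) $ n" by (simp add: sgnf_def fps_mult_nth)
  finally show "sgnf (f*g) $ n = (sgnf f * sgnf g) $ n" .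
qed

lemma sgnf_diff: "sgnf (f - g) = sgnf f - sgnf g"
  by (rule fps_ext) (simp add: sgnf_def algebra_simps)

lemma sgnf_one: "sgnf 1 = 1"
  by (rule fps_ext) (simp add: sgnf_def)

lemma sgnf_X: "sgnf fps_X = - fps_X"
  by (rule fps_ext) (simp add: sgnf_def fps_X_def)

lemma sgnf_exp: "sgnf (fps_exp 1) = fps_exp (-1)"
  by (rule fps_ext) (simp add: sgnf_def)

definition EE :: "rat fps" where "EE = fps_X / (fps_exp 1 - 1)"

lemma EE_eq: "EE * (fps_exp 1 - 1) = fps_X"
proof -
  have ne: "(fps_exp 1 - 1 :: rat fps) \<noteq> 0"
  proof
    assume "(fps_exp 1 - 1 :: rat fps) = 0"
    then have "(fps_exp 1 - 1 :: rat fps) $ 1 = 0" by simp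
    then show False by simp
  qed
  have "subdegree (fps_exp 1 - 1 :: rat fps) \<le> subdegree (fps_X :: rat fps)"
  proof -
    have "subdegree (fps_exp 1 - 1 :: rat fps) \<le> 1"
      by (rule subdegree_leI) simp
    then show ?thesis by simp
  qed
  then show ?thesis unfolding EE_def using fps_times_divide_eq[OF ne] by simp
qed

lemma key_fps: "fps_exp 1 * EE = sgnf EE"
proof -
  let ?e = "fps_exp (1::rat)"
  have ne: "(?e - 1) \<noteq> 0"
  proof
    assume "?e - 1 = 0"
    then have "(?e - 1) $ 1 = 0" by simp
    then show False by simp
  qed
  have inv: "fps_exp (-1) * ?e = 1"
    using fps_exp_add_mult[of "1::rat" "-1"] by (simp add: mult.commute)
  have "sgnf EE * (fps_exp (-1) - 1) = - fps_X"
    using arg_cong[OF EE_eq, of sgnf] by (simp add: sgnf_mult sgnf_diff sgnf_one sgnf_X sgnf_exp)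
  then have h: "sgnf EE * (fps_exp (-1) - 1) * ?e = - fps_X * ?e" by simp
  have "sgnf EE * (1 - ?e) = - fps_X * ?e"
  proof -
    have inv2: "?e * fps_exp (-1) = 1" using inv by (simp add: mult.commute)
    have "sgnf EE * (fps_exp (-1) - 1) * ?e = sgnf EE * (?e * fps_exp (-1)) - sgnf EE * ?e"
      by (simp add: algebra_simps)
    also have "\<dots> = sgnf EE * (1 - ?e)" by (simp only: inv2 right_diff_distrib mult_1_right)
    finally show ?thesis using h by simp
  qed
  then have a: "sgnf EE * (?e - 1) = fps_X * ?e"
    by (simp add: algebra_simps)
  have b: "(?e * EE) * (?e - 1) = fps_X * ?e"
    using EE_eq by (simp add: algebra_simps)
  from a b have "(?e * EE) * (?e - 1) = sgnf EE * (?e - 1)" by simp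
  with ne show ?thesis by simp
qed

lemma bern_EE: "bernoulli n = fact n * EE $ n"
  by (simp add: bernoulli_def EE_def)

lemma K: "(\<Sum>k\<le>n. of_nat (n choose k) * bernoulli k) = (-1)^n * bernoulli n"
proof -
  have "(EE * fps_exp 1) $ n = sgnf EE $ n" using key_fps by (simp add: mult.commute)
  then have "(\<Sum>i=0..n. EE$i * (1 / fact (n-i))) = (-1)^n * EE $ n"
    by (simp add: fps_mult_nth sgnf_def)
  then have "fact n * (\<Sum>i=0..n. EE$i * (1 / fact (n-i))) = (-1)^n * bernoulli n"
    by (simp add: bern_EE)
  moreover have "fact n * (\<Sum>i=0..n. EE$i * (1 / fact (n-i))) = (\<Sum>k\<le>n. of_nat (n choose k) * bernoulli k)"
    unfolding sum_distrib_left atLeast0AtMost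
  proof (rule sum.cong)
    fix k assume "k \<in> {..n}"
    then have "k \<le> n" by simp
    then show "fact n * (EE$k * (1 / fact (n-k))) = of_nat (n choose k) * bernoulli k"
      by (simp add: binomial_fact bern_EE field_simps)
  qed simp
  ultimately show ?thesis by simp
qed

lemma odd_zero: "bernoulli (2*j+3) = 0"
proof -
  have "(fps_exp 1 * EE) $ (2*j+3) = sgnf EE $ (2*j+3)" using key_fps by simp
  moreover have "(fps_exp 1 * EE) = EE + (fps_exp 1 - 1) * EE" by (simp add: algebra_simps)
  ultimately have "EE $ (2*j+3) + ((fps_exp 1 - 1) * EE) $ (2*j+3) = - EE $ (2*j+3)"
    by (simp add: sgnf_def)
  moreover have "((fps_exp 1 - 1) * EE) $ (2*j+3) = 0"
    using EE_eq by (simp add: mult.commute)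
  ultimately have "EE $ (2*j+3) = 0" by simp
  then show ?thesis by (simp add: bern_EE)
qed


definition LN :: "nat \<Rightarrow> rat poly \<Rightarrow> rat" where
  "LN N p = (\<Sum>i\<le>N. coeff p i * bernoulli i)"

definition cc :: "rat poly" where "cc = [:-1,-1:]"

lemma LN_sum: "LN N (sum f A) = (\<Sum>x\<in>A. LN N (f x))"
  unfolding LN_def coeff_sum sum_distrib_right by (rule sum.swap)

lemma LN_smult: "LN N (smult a p) = a * LN N p"
  unfolding LN_def by (simp add: sum_distrib_left mult.assoc)

lemma LN_minus: "LN N (- p) = - LN N p"
  unfolding LN_def by (simp add: sum_negf)

lemma coeff_cc_pow: "coeff (cc ^ i) k = (if k \<le> i then of_nat (i choose k) * (-1)^i else 0)"
proof (cases "k \<le> i")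
  case True
  then show ?thesis unfolding cc_def
    by (simp add: coeff_linear_poly_power power_add[symmetric])
next
  case False
  have "degree (cc ^ i) \<le> i"
    by (rule order.trans[OF degree_power_le]) (simp add: cc_def)
  with False show ?thesis by (simp add: coeff_eq_0)
qed

lemma LN_cc_pow: assumes "i \<le> N" shows "LN N (cc ^ i) = bernoulli i"
proof -
  have "LN N (cc ^ i) = (\<Sum>k\<le>N. (if k \<le> i then of_nat (i choose k) * (-1)^i * bernoulli k else 0))"
    unfolding LN_def coeff_cc_pow by (intro sum.cong) auto
  also have "\<dots> = (\<Sum>k\<le>i. of_nat (i choose k) * (-1)^i * bernoulli k)"
    using assms by (simp add: sum.If_cases Int_absorb1 flip: atMost_def)
  also have "\<dots> = (-1)^i * (\<Sum>k\<le>i. of_nat (i choose k) * bernoulli k)"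
    by (simp add: sum_distrib_left mult_ac)
  also have "\<dots> = bernoulli i" by (simp add: K power_add[symmetric])
  finally show ?thesis .
qed

lemma pcompose_monom': "pcompose (monom a i) q = smult a (q ^ i)"
  by (induction i) (simp_all add: monom_Suc pcompose_pCons monom_0 one_pCons)

lemma LN_sym: assumes "degree p \<le> N" shows "LN N (pcompose p cc) = LN N p"
proof -
  have "LN N (pcompose p cc) = LN N (pcompose (\<Sum>i\<le>degree p. monom (coeff p i) i) cc)"
    by (simp add: poly_as_sum_of_monoms)
  also have "\<dots> = (\<Sum>i\<le>degree p. coeff p i * bernoulli i)"
    unfolding pcompose_sum LN_sum pcompose_monom' LN_smult
    using assms by (intro sum.cong) (auto simp: LN_cc_pow)
  also have "\<dots> = LN N p"
    unfolding LN_def using assms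
    by (intro sum.mono_neutral_left) (auto simp: coeff_eq_0)
  finally show ?thesis .
qed


lemma pcompose_power': "pcompose (p ^ n) q = (pcompose p q) ^ n"
  by (induction n) (simp_all add: pcompose_mult pcompose_1)

lemma coeff_11_pow: "coeff ([:1,1:] ^ n) j = (of_nat (n choose j) :: rat)"
proof (cases "j \<le> n")
  case True then show ?thesis by (simp add: coeff_linear_poly_power)
next
  case False
  have "degree ([:1::rat,1:] ^ n) \<le> n"
    by (rule order.trans[OF degree_power_le]) simp
  with False show ?thesis by (simp add: coeff_eq_0)
qed

definition qq :: "nat \<Rightarrow> rat poly" where "qq m = [:0,1,1:] ^ (m+1)"

lemma qq_sym: "pcompose (qq m) cc = qq m"
  unfolding qq_def pcompose_power' by (simp add: cc_def pcompose_pCons)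

lemma coeff_qq: "coeff (qq m) k = (if k < m+1 then 0 else of_nat ((m+1) choose (k-(m+1))))"
proof -
  have "qq m = monom 1 (m+1) * [:1,1:] ^ (m+1)"
  proof -
    have "[:0,1,1::rat:] = monom 1 1 * [:1,1:]" by (simp add: monom_Suc monom_0)
    then have "qq m = (monom 1 1 * [:1,1:])^(m+1)" unfolding qq_def by (simp only:)
    then show ?thesis by (simp only: power_mult_distrib monom_power) simp
  qed
  then show ?thesis by (simp only: coeff_monom_mult coeff_11_pow) simp
qed

lemma degree_qq: "degree (qq m) \<le> 2*m+2"
proof -
  have "degree (qq m) \<le> (m+1) * degree [:0,1,1::rat:]"
    unfolding qq_def using degree_power_le[of "[:0,1,1::rat:]" "m+1"] by (simp add: mult.commute)
  then show ?thesis by simp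
qed

lemma rr_sym: "pcompose (pderiv (qq m)) cc = - pderiv (qq m)"
proof -
  have "pderiv (qq m) = pcompose (pderiv (qq m)) cc * pderiv cc"
    using pderiv_pcompose[of "qq m" cc] qq_sym by simp
  also have "pderiv cc = [:-1:]" by (simp add: cc_def pderiv_pCons)
  finally show ?thesis by simp
qed

lemma LN_rr: "LN (2*m+1) (pderiv (qq m)) = 0"
proof -
  have "degree (pderiv (qq m)) \<le> 2*m+1"
    using degree_qq[of m] by (simp add: degree_pderiv)
  then have "LN (2*m+1) (pcompose (pderiv (qq m)) cc) = LN (2*m+1) (pderiv (qq m))"
    by (rule LN_sym)
  then show ?thesis by (simp add: rr_sym LN_minus)
qed

lemma sum_even_odd: "(\<Sum>i<2*(n::nat). f i) = (\<Sum>j<n. f (2*j) + f (2*j+1))"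
  by (induction n) (simp_all add: sum.distrib add_ac)


theorem mainTheorem5:
  fixes m :: nat
  assumes "m \<ge> 2"
  shows "bernoulli (2*m) =
    - 1 / (of_nat (m+1) * of_nat (2*m+1)) *
      (\<Sum>j = m - m div 2 .. m - 1.
         of_nat ((m+1) choose (2*m - 2*j + 1)) * of_nat (1 + 2*j) * bernoulli (2*j))"
proof -
  define f where "f i = coeff (pderiv (qq m)) i * bernoulli i" for i
  define T where "T = (\<Sum>j = m - m div 2 .. m - 1.
         of_nat ((m+1) choose (2*m - 2*j + 1)) * of_nat (1 + 2*j) * bernoulli (2*j) :: rat)"
  have cr: "coeff (pderiv (qq m)) i = (if i < m then 0 else of_nat (i+1) * of_nat ((m+1) choose (i-m)))" for i
    by (simp add: coeff_pderiv coeff_qq)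
  have "0 = (\<Sum>i<2*(m+1). f i)"
  proof -
    have "{..2*m+1} = {..<2*(m+1)}" by auto
    then show ?thesis using LN_rr[of m] unfolding LN_def f_def by simp
  qed
  also have "\<dots> = (\<Sum>j<m+1. f (2*j) + f (2*j+1))" by (rule sum_even_odd)
  also have "\<dots> = (\<Sum>j<m+1. f (2*j))"
  proof (rule sum.cong)
    fix j assume "j \<in> {..<m+1}"
    have "f (2*j+1) = 0"
    proof (cases j)
      case 0 then show ?thesis using assms by (simp add: f_def cr)
    next
      case (Suc k)
      then have "2*j+1 = 2*k+3" by simp
      then show ?thesis unfolding f_def using odd_zero[of k] by (simp only:)
    qed
    then show "f (2*j) + f (2*j+1) = f (2*j)" by simp
  qed simp
  also have "\<dots> = (\<Sum>j<m. f (2*j)) + f (2*m)" by simp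
  also have "(\<Sum>j<m. f (2*j)) = (\<Sum>j = m - m div 2 .. m - 1. f (2*j))"
  proof (rule sum.mono_neutral_right)
    show "{m - m div 2..m - 1} \<subseteq> {..<m}" using assms by auto
    show "\<forall>i\<in>{..<m} - {m - m div 2..m - 1}. f (2 * i) = 0"
    proof
      fix i assume "i \<in> {..<m} - {m - m div 2..m - 1}"
      then have "2*i < m" by auto
      then show "f (2*i) = 0" by (simp add: f_def cr)
    qed
  qed simp
  also have "\<dots> = T" unfolding T_def
  proof (rule sum.cong)
    fix j assume j: "j \<in> {m - m div 2..m - 1}"
    then have j1: "m \<le> 2*j" "j < m" using assms by auto
    have "(m+1) choose (2*j - m) = (m+1) choose ((m+1) - (2*j-m))"
      using j1 by (intro binomial_symmetric) simp
    also have "(m+1) - (2*j-m) = 2*m - 2*j + 1" using j1 by simp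
    finally have ch: "(m+1) choose (2*j - m) = (m+1) choose (2*m - 2*j + 1)" .
    show "f (2*j) = of_nat ((m+1) choose (2*m - 2*j + 1)) * of_nat (1 + 2*j) * bernoulli (2*j)"
      using j1 ch by (simp add: f_def cr del: binomial_Suc_Suc)
  qed simp
  also have "f (2*m) = of_nat (2*m+1) * of_nat (m+1) * bernoulli (2*m)"
    by (simp add: f_def cr)
  finally have eq: "0 = T + of_nat (2*m+1) * of_nat (m+1) * bernoulli (2*m)" .
  have ne: "(of_nat (m+1) * of_nat (2*m+1) :: rat) \<noteq> 0" by simp
  have X: "of_nat (2*m+1) * of_nat (m+1) * bernoulli (2*m) = - T" using eq by linarith
  have "bernoulli (2*m) = - T / (of_nat (m+1) * of_nat (2*m+1))"
  proof (rule eq_divide_imp[OF ne])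
    show "bernoulli (2*m) * (of_nat (m+1) * of_nat (2*m+1)) = - T"
      using X by (metis mult.commute mult.assoc)
  qed
  then show ?thesis unfolding T_def[symmetric] by simp
qed

end
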